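(* If $i \ne j \ne k \ne i$, then $w_{i,j,k}:=|\Lambda_i,\Lambda_j,\Lambda_k| \in I_{W_d}$.
   Context: Let $P_d$ be a convex polygon with $d\ge 4$ vertices $v_1,\dots,v_d$ (indices mod $d$) over a field $\mathbb{K}$ with no three edge lines concurrent. Set ${\bf v}_i=(v_i,1)$, ${\bf n}_i={\bf v}_i\times{\bf v}_{i+1}$, $\alpha_j=|{\bf v}_{j-1}\,{\bf v}_j\,{\bf v}_{j+1}|$, $\ell_j=|{\bf v}_j\,{\bf v}_{j+1}\,{\bf p}|$, $b_i=\alpha_i\prod_{j\ne i-1,i}\ell_j$; $W_d$ is the closure of the image of $p\mapsto(b_1,\dots,b_d)$ with ideal $I_{W_d}\subseteq S=\mathbb{K}[x_1,\ldots,x_d]$. $\Lambda_r=\frac{x_{r+1}}{\alpha_{r+1}}{\bf n}_{r+1}-\frac{x_r}{\alpha_r}{\bf n}_{r-1}\in S_1^3$, and $|\Lambda_i,\Lambda_j,\Lambda_k|$ is the determinant of the $3\times 3$ matrix of linear forms with these columns. *)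

theory Defs
  imports Main
begin

text \<open>Vectors in K^3 are triples. Indices of vertices/edges are natural numbers taken mod d
  (so the paper's v_1..v_d correspond to v 1, ..., v (d-1), v 0 = v d).\<close>

type_synonym 'a vec3 = "'a \<times> 'a \<times> 'a"

definition det3 :: "'a::comm_ring_1 vec3 \<Rightarrow> 'a vec3 \<Rightarrow> 'a vec3 \<Rightarrow> 'a" where
  "det3 u v w = (case u of (u1,u2,u3) \<Rightarrow> case v of (v1,v2,v3) \<Rightarrow> case w of (w1,w2,w3) \<Rightarrow>
      u1*(v2*w3 - v3*w2) - v1*(u2*w3 - u3*w2) + w1*(u2*v3 - u3*v2))"

definition cross3 :: "'a::comm_ring_1 vec3 \<Rightarrow> 'a vec3 \<Rightarrow> 'a vec3" where
  "cross3 u v = (case u of (u1,u2,u3) \<Rightarrow> case v of (v1,v2,v3) \<Rightarrow>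
      (u2*v3 - u3*v2, u3*v1 - u1*v3, u1*v2 - u2*v1))"

definition scale3 :: "'a::comm_ring_1 \<Rightarrow> 'a vec3 \<Rightarrow> 'a vec3" where
  "scale3 c u = (case u of (u1,u2,u3) \<Rightarrow> (c*u1, c*u2, c*u3))"

definition diff3 :: "'a::comm_ring_1 vec3 \<Rightarrow> 'a vec3 \<Rightarrow> 'a vec3" where
  "diff3 u v = (case u of (u1,u2,u3) \<Rightarrow> case v of (v1,v2,v3) \<Rightarrow> (u1-v1, u2-v2, u3-v3))"

definition hom :: "'a::comm_ring_1 \<times> 'a \<Rightarrow> 'a vec3" where
  "hom p = (fst p, snd p, 1)"

definition vtx :: "nat \<Rightarrow> (nat \<Rightarrow> 'a \<times> 'a) \<Rightarrow> nat \<Rightarrow> 'a::comm_ring_1 vec3" where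
  "vtx d v i = hom (v (i mod d))"

definition nrm :: "nat \<Rightarrow> (nat \<Rightarrow> 'a \<times> 'a) \<Rightarrow> nat \<Rightarrow> 'a::comm_ring_1 vec3" where
  "nrm d v i = cross3 (vtx d v i) (vtx d v (i + 1))"

definition prv :: "nat \<Rightarrow> nat \<Rightarrow> nat" where
  "prv d i = (i + d - 1) mod d"

definition alpha :: "nat \<Rightarrow> (nat \<Rightarrow> 'a \<times> 'a) \<Rightarrow> nat \<Rightarrow> 'a::comm_ring_1" where
  "alpha d v j = det3 (vtx d v (prv d j)) (vtx d v j) (vtx d v (j + 1))"

definition ell :: "nat \<Rightarrow> (nat \<Rightarrow> 'a \<times> 'a) \<Rightarrow> nat \<Rightarrow> 'a \<times> 'a \<Rightarrow> 'a::comm_ring_1" where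
  "ell d v j p = det3 (vtx d v j) (vtx d v (j + 1)) (hom p)"

definition bcoord :: "nat \<Rightarrow> (nat \<Rightarrow> 'a \<times> 'a) \<Rightarrow> nat \<Rightarrow> 'a \<times> 'a \<Rightarrow> 'a::comm_ring_1" where
  "bcoord d v i p = alpha d v i *
     (\<Prod>j \<in> {0..<d} - {prv d i, i mod d}. ell d v j p)"

text \<open>The map p \<mapsto> (b_1,...,b_d); points of K^d are functions nat \<Rightarrow> K
  (only the coordinates 0..d-1 matter, the others are set to 0).\<close>
definition bmap :: "nat \<Rightarrow> (nat \<Rightarrow> 'a \<times> 'a) \<Rightarrow> 'a \<times> 'a \<Rightarrow> (nat \<Rightarrow> 'a::comm_ring_1)" where
  "bmap d v p = (\<lambda>i. if i < d then bcoord d v i p else 0)"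

text \<open>Image of the parametrization (W_d is its Zariski closure).\<close>
definition Wimage :: "nat \<Rightarrow> (nat \<Rightarrow> 'a \<times> 'a) \<Rightarrow> (nat \<Rightarrow> 'a::comm_ring_1) set" where
  "Wimage d v = range (bmap d v)"

text \<open>Ideal of W_d: polynomials (given as polynomial functions K^d \<rightarrow> K) vanishing on W_d;
  a polynomial vanishes on the Zariski closure of a set iff it vanishes on the set.\<close>
definition I_W :: "nat \<Rightarrow> (nat \<Rightarrow> 'a \<times> 'a) \<Rightarrow> ((nat \<Rightarrow> 'a::comm_ring_1) \<Rightarrow> 'a) set" where
  "I_W d v = {f. \<forall>y \<in> Wimage d v. f y = 0}"

definition Lam :: "nat \<Rightarrow> (nat \<Rightarrow> 'a \<times> 'a) \<Rightarrow> nat \<Rightarrow> (nat \<Rightarrow> 'a) \<Rightarrow> 'a::field vec3" where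
  "Lam d v r x = diff3
      (scale3 (x ((r + 1) mod d) / alpha d v (r + 1)) (nrm d v (r + 1)))
      (scale3 (x (r mod d) / alpha d v r) (nrm d v (prv d r)))"

definition w_ijk :: "nat \<Rightarrow> (nat \<Rightarrow> 'a \<times> 'a) \<Rightarrow> nat \<Rightarrow> nat \<Rightarrow> nat \<Rightarrow> (nat \<Rightarrow> 'a) \<Rightarrow> 'a::field" where
  "w_ijk d v i j k x = det3 (Lam d v i x) (Lam d v j x) (Lam d v k x)"

definition convex_polygon :: "nat \<Rightarrow> (nat \<Rightarrow> 'a::linordered_field \<times> 'a) \<Rightarrow> bool" where
  "convex_polygon d v \<longleftrightarrow> d \<ge> 3 \<and>
     ((\<forall>i<d. \<forall>j<d. j \<noteq> i \<and> j \<noteq> (i + 1) mod d \<longrightarrow>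
         det3 (vtx d v i) (vtx d v (i + 1)) (vtx d v j) > 0) \<or>
      (\<forall>i<d. \<forall>j<d. j \<noteq> i \<and> j \<noteq> (i + 1) mod d \<longrightarrow>
         det3 (vtx d v i) (vtx d v (i + 1)) (vtx d v j) < 0))"

definition no_three_concurrent :: "nat \<Rightarrow> (nat \<Rightarrow> 'a::comm_ring_1 \<times> 'a) \<Rightarrow> bool" where
  "no_three_concurrent d v \<longleftrightarrow>
     (\<forall>i<d. \<forall>j<d. \<forall>k<d. i \<noteq> j \<and> j \<noteq> k \<and> i \<noteq> k \<longrightarrow>
        \<not> (\<exists>p. ell d v i p = 0 \<and> ell d v j p = 0 \<and> ell d v k p = 0))"

end

theory Submission
  imports Defs
begin

definition dot3 :: "'a::comm_ring_1 vec3 \<Rightarrow> 'a vec3 \<Rightarrow> 'a" where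
  "dot3 u v = (case u of (u1,u2,u3) \<Rightarrow> case v of (v1,v2,v3) \<Rightarrow> u1*v1+u2*v2+u3*v3)"

lemma dot_diff_scale:
  "dot3 (diff3 (scale3 c1 n1) (scale3 c2 n2)) q = c1 * dot3 n1 q - c2 * dot3 n2 q"
  by (cases n1; cases n2; cases q) (auto simp: dot3_def diff3_def scale3_def algebra_simps)

lemma det_orth:
  fixes a :: "'a::field vec3"
  assumes "dot3 a (p1,p2,1) = 0" "dot3 b (p1,p2,1) = 0" "dot3 c (p1,p2,1) = 0"
  shows "det3 a b c = 0"
proof -
  obtain a1 a2 a3 where A: "a = (a1,a2,a3)" by (cases a) auto
  obtain b1 b2 b3 where B: "b = (b1,b2,b3)" by (cases b) auto
  obtain c1 c2 c3 where C: "c = (c1,c2,c3)" by (cases c) auto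
  have "a3 + (a1*p1+a2*p2) = 0" using assms(1) A by (simp add: dot3_def algebra_simps)
  hence ha: "a3 = -(a1*p1+a2*p2)" by (metis eq_neg_iff_add_eq_0)
  have "b3 + (b1*p1+b2*p2) = 0" using assms(2) B by (simp add: dot3_def algebra_simps)
  hence hb: "b3 = -(b1*p1+b2*p2)" by (metis eq_neg_iff_add_eq_0)
  have "c3 + (c1*p1+c2*p2) = 0" using assms(3) C by (simp add: dot3_def algebra_simps)
  hence hc: "c3 = -(c1*p1+c2*p2)" by (metis eq_neg_iff_add_eq_0)
  show ?thesis unfolding A B C det3_def ha hb hc by simp algebra
qed

lemma ell_dot: "ell d v j p = dot3 (nrm d v j) (hom p)"
  unfolding ell_def nrm_def
  by (cases "vtx d v j"; cases "vtx d v (j+1)"; cases p)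
     (auto simp: det3_def cross3_def dot3_def hom_def algebra_simps)

lemma vtx_mod: "vtx d v (n mod d) = vtx d v n"
  by (simp add: vtx_def)

lemma vtx_mod1: "0 < d \<Longrightarrow> vtx d v (n mod d + 1) = vtx d v (n + 1)"
  by (simp add: vtx_def mod_Suc_eq)

lemma prv_mod: "prv d (n mod d) = prv d n"
proof (cases "d = 0")
  case True then show ?thesis by (simp add: prv_def)
next
  case False
  then have "n mod d + d - 1 = n mod d + (d - 1)" "n + d - 1 = n + (d - 1)" by auto
  then show ?thesis unfolding prv_def by (simp add: mod_add_left_eq)
qed

lemma ell_mod: "0 < d \<Longrightarrow> ell d v (n mod d) p = ell d v n p"
  by (simp add: ell_def vtx_def mod_Suc_eq)

lemma alpha_mod: "0 < d \<Longrightarrow> alpha d v (n mod d) = alpha d v n"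
  by (simp add: alpha_def vtx_def mod_Suc_eq prv_mod)

lemma det3_cyc: "det3 a b c = det3 b c (a::'a::comm_ring_1 vec3)"
proof -
  obtain a1 a2 a3 where A: "a = (a1,a2,a3)" by (cases a) auto
  obtain b1 b2 b3 where B: "b = (b1,b2,b3)" by (cases b) auto
  obtain c1 c2 c3 where C: "c = (c1,c2,c3)" by (cases c) auto
  show ?thesis unfolding A B C det3_def by (simp add: algebra_simps)
qed

lemma prv_expl: "0 < d \<Longrightarrow> prv d n = (if n mod d = 0 then d - 1 else n mod d - 1)"
proof -
  assume d: "0 < d"
  have "prv d n = (n mod d + (d - 1)) mod d" unfolding prv_def
    using d by (metis Nat.add_diff_assoc One_nat_def Suc_leI mod_add_left_eq)
  moreover have "n mod d < d" using d by simp
  ultimately show ?thesis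
  proof (cases "n mod d = 0")
    case True
    then show ?thesis using \<open>prv d n = _\<close> d by simp
  next
    case False
    then have e: "n mod d + (d - 1) = (n mod d - 1) + d" using d by simp
    have "(n mod d - 1) < d" using \<open>n mod d < d\<close> by simp
    then have "((n mod d - 1) + d) mod d = n mod d - 1" by simp
    then show ?thesis using \<open>prv d n = _\<close> False e by simp
  qed
qed

lemma prv_lt: "0 < d \<Longrightarrow> prv d n < d"
  by (simp add: prv_def)

lemma prv_ne: "2 \<le> d \<Longrightarrow> prv d n \<noteq> n mod d"
  using prv_expl[of d n] by (cases "n mod d = 0") auto

lemma prv_ne1: "3 \<le> d \<Longrightarrow> prv d n \<noteq> (n mod d + 1) mod d"
proof -
  assume d: "3 \<le> d"
  have lt: "n mod d < d" using d by simp
  show ?thesis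
  proof (cases "n mod d = 0")
    case True then show ?thesis using prv_expl[of d n] d by simp
  next
    case False
    show ?thesis
    proof (cases "n mod d + 1 < d")
      case True then show ?thesis using prv_expl[of d n] d False by simp
    next
      case False2: False
      then have "n mod d + 1 = d" using lt by simp
      then show ?thesis using prv_expl[of d n] d False by simp
    qed
  qed
qed

lemma alpha_nz:
  assumes "convex_polygon d v"
  shows "alpha d v n \<noteq> 0"
proof -
  have d3: "d \<ge> 3" using assms by (simp add: convex_polygon_def)
  define i where "i = n mod d"
  have i: "i < d" using d3 by (simp add: i_def)
  define j where "j = prv d n"
  have j: "j < d" using d3 by (simp add: j_def prv_lt)
  have j1: "j \<noteq> i" using prv_ne[of d n] d3 by (simp add: i_def j_def)
  have j2: "j \<noteq> (i + 1) mod d" using prv_ne1[of d n] d3 by (simp add: i_def j_def)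
  have "det3 (vtx d v i) (vtx d v (i + 1)) (vtx d v j) \<noteq> 0"
  proof -
    have "(\<forall>i<d. \<forall>j<d. j \<noteq> i \<and> j \<noteq> (i + 1) mod d \<longrightarrow>
         det3 (vtx d v i) (vtx d v (i + 1)) (vtx d v j) > 0) \<or>
      (\<forall>i<d. \<forall>j<d. j \<noteq> i \<and> j \<noteq> (i + 1) mod d \<longrightarrow>
         det3 (vtx d v i) (vtx d v (i + 1)) (vtx d v j) < 0)"
      using assms unfolding convex_polygon_def by blast
    then show ?thesis
    proof
      assume H: "\<forall>i<d. \<forall>j<d. j \<noteq> i \<and> j \<noteq> (i + 1) mod d \<longrightarrow>
         det3 (vtx d v i) (vtx d v (i + 1)) (vtx d v j) > 0"
      have "det3 (vtx d v i) (vtx d v (i + 1)) (vtx d v j) > 0" using H i j j1 j2 by blast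
      then show ?thesis by simp
    next
      assume H: "\<forall>i<d. \<forall>j<d. j \<noteq> i \<and> j \<noteq> (i + 1) mod d \<longrightarrow>
         det3 (vtx d v i) (vtx d v (i + 1)) (vtx d v j) < 0"
      have "det3 (vtx d v i) (vtx d v (i + 1)) (vtx d v j) < 0" using H i j j1 j2 by blast
      then show ?thesis by simp
    qed
  qed
  moreover have "vtx d v i = vtx d v n" by (simp add: i_def vtx_mod)
  moreover have "vtx d v (i+1) = vtx d v (n+1)" using d3 by (simp add: i_def vtx_def mod_Suc_eq)
  moreover have "alpha d v n = det3 (vtx d v n) (vtx d v (n+1)) (vtx d v j)"
    unfolding alpha_def j_def by (rule det3_cyc)
  ultimately show ?thesis by simp
qed

lemma Lam_dot:
  fixes v :: "nat \<Rightarrow> 'a::linordered_field \<times> 'a"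
  assumes cv: "convex_polygon d v" and r: "r < d"
  shows "dot3 (Lam d v r (bmap d v p)) (hom p) = 0"
proof -
  have d3: "d \<ge> 3" using cv by (simp add: convex_polygon_def)
  define s where "s = (r + 1) mod d"
  have s: "s < d" using r by (simp add: s_def)
  have prs: "prv d s = r"
  proof -
    have "prv d s = prv d (r+1)" by (simp add: s_def prv_mod)
    also have "\<dots> = (r + d) mod d" unfolding prv_def by simp
    also have "\<dots> = r" using r by simp
    finally show ?thesis .
  qed
  have sr: "s \<noteq> r"
  proof (cases "r + 1 < d")
    case True then show ?thesis by (simp add: s_def)
  next
    case False then have "r + 1 = d" using r by simp
    then show ?thesis using d3 by (simp add: s_def)
  qed
  define A where "A = {0..<d} - {r}"
  have pr: "prv d r \<noteq> r" using prv_ne[of d r] d3 r by simp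
  have prA: "prv d r \<in> A" using pr prv_lt[of d r] d3 by (simp add: A_def)
  have sA: "s \<in> A" using sr s by (simp add: A_def)
  have x1: "bmap d v p s / alpha d v (r + 1) = (\<Prod>j \<in> A - {s}. ell d v j p)"
  proof -
    have "bmap d v p s = alpha d v s * (\<Prod>j \<in> {0..<d} - {r, s}. ell d v j p)"
      using s prs by (simp add: bmap_def bcoord_def)
    moreover have "alpha d v s = alpha d v (r+1)" using d3 by (simp add: s_def alpha_mod)
    moreover have "{0..<d} - {r, s} = A - {s}" by (auto simp: A_def)
    ultimately show ?thesis using alpha_nz[OF cv, of "r+1"] by simp
  qed
  have x2: "bmap d v p (r mod d) / alpha d v r = (\<Prod>j \<in> A - {prv d r}. ell d v j p)"
  proof -
    have "bmap d v p (r mod d) = alpha d v r * (\<Prod>j \<in> {0..<d} - {prv d r, r}. ell d v j p)"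
      using r by (simp add: bmap_def bcoord_def)
    moreover have "{0..<d} - {prv d r, r} = A - {prv d r}" by (auto simp: A_def)
    ultimately show ?thesis using alpha_nz[OF cv, of "r"] by simp
  qed
  have e1: "dot3 (nrm d v (r+1)) (hom p) = ell d v s p"
    using d3 by (simp add: ell_dot[symmetric] s_def ell_mod)
  have e2: "dot3 (nrm d v (prv d r)) (hom p) = ell d v (prv d r) p"
    by (simp add: ell_dot)
  have fA: "finite A" by (simp add: A_def)
  have L: "Lam d v r (bmap d v p) = diff3 (scale3 (bmap d v p s / alpha d v (r+1)) (nrm d v (r+1)))
      (scale3 (bmap d v p (r mod d) / alpha d v r) (nrm d v (prv d r)))"
    unfolding Lam_def s_def by (rule refl)
  have q1: "(\<Prod>j \<in> A - {s}. ell d v j p) * ell d v s p = (\<Prod>j \<in> A. ell d v j p)"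
    by (subst prod.remove[OF fA sA]) (rule mult.commute)
  have q2: "(\<Prod>j \<in> A - {prv d r}. ell d v j p) * ell d v (prv d r) p = (\<Prod>j \<in> A. ell d v j p)"
    by (subst prod.remove[OF fA prA]) (rule mult.commute)
  have "dot3 (Lam d v r (bmap d v p)) (hom p)
      = (\<Prod>j \<in> A - {s}. ell d v j p) * ell d v s p - (\<Prod>j \<in> A - {prv d r}. ell d v j p) * ell d v (prv d r) p"
    unfolding L dot_diff_scale x1 x2 e1 e2 by (rule refl)
  also have "\<dots> = 0" unfolding q1 q2 by simp
  finally show ?thesis .
qed

theorem theorem4p1:
  fixes d :: nat and v :: "nat \<Rightarrow> 'a::linordered_field \<times> 'a" and i j k :: nat
  assumes "d \<ge> 4"
    and "convex_polygon d v"
    and "no_three_concurrent d v"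
    and "i < d" and "j < d" and "k < d"
    and "i \<noteq> j" and "j \<noteq> k" and "k \<noteq> i"
  shows "w_ijk d v i j k \<in> I_W d v"
  unfolding I_W_def Wimage_def
proof (intro CollectI ballI)
  fix y assume "y \<in> range (bmap d v)"
  then obtain p where y: "y = bmap d v p" by auto
  obtain p1 p2 where p: "p = (p1, p2)" by (cases p)
  have h: "hom p = (p1, p2, 1)" by (simp add: hom_def p)
  show "w_ijk d v i j k y = 0"
    unfolding w_ijk_def y
  proof (rule det_orth[of _ p1 p2])
    show "dot3 (Lam d v i (bmap d v p)) (p1, p2, 1) = 0" using Lam_dot[OF assms(2) assms(4), of p] h by simp
    show "dot3 (Lam d v j (bmap d v p)) (p1, p2, 1) = 0" using Lam_dot[OF assms(2) assms(5), of p] h by simp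
    show "dot3 (Lam d v k (bmap d v p)) (p1, p2, 1) = 0" using Lam_dot[OF assms(2) assms(6), of p] h by simp
  qed
qed

end
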